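(* Let $p:\widetilde G\to G$ be a two-fold cover and $\tilde g\in\widetilde G$ semisimple. Then (1) $p(\mathcal O(\widetilde G,\tilde g))=\mathcal O(G,p(\tilde g))$; (2) $p^{-1}(\mathcal O(G,p(\tilde g)))=\mathcal O(\widetilde G,\tilde g)\cup\mathcal O(\widetilde G,-\tilde g)$; (3) if $\tilde g$ is strongly regular and relevant, then $\mathcal O(\widetilde G,\tilde g)\neq\mathcal O(\widetilde G,-\tilde g)$.
   Context: $G$ is the group of real points of a connected reductive complex algebraic group, and $p$ has kernel identified with $\{\pm1\}$. $\mathcal O(X,x)$ denotes the $X$-conjugacy class of $x$. $\tilde g$ is strongly regular if $p(\tilde g)$ is semisimple with centralizer in $G(\mathbb C)$ a maximal torus; then $H=\mathrm{Cent}_G(p(\tilde g))$ is a Cartan subgroup. A strongly regular semisimple $\tilde g$ is relevant if $\tilde g\in Z(p^{-1}(H))$ for $H=\mathrm{Cent}_G(p(\tilde g))$. *)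

theory Defs
  imports "HOL-Algebra.Algebra"
begin

definition conj_class :: "('a, 'm) monoid_scheme \<Rightarrow> 'a \<Rightarrow> 'a set" where
  "conj_class H x = {y \<otimes>\<^bsub>H\<^esub> x \<otimes>\<^bsub>H\<^esub> inv\<^bsub>H\<^esub> y | y. y \<in> carrier H}"

definition centralizer_of :: "('a, 'm) monoid_scheme \<Rightarrow> 'a \<Rightarrow> 'a set" where
  "centralizer_of H x = {y \<in> carrier H. y \<otimes>\<^bsub>H\<^esub> x = x \<otimes>\<^bsub>H\<^esub> y}"

definition center_of :: "('a, 'm) monoid_scheme \<Rightarrow> 'a set \<Rightarrow> 'a set" where
  "center_of H S = {x \<in> S. \<forall>y\<in>S. x \<otimes>\<^bsub>H\<^esub> y = y \<otimes>\<^bsub>H\<^esub> x}"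

definition relevant ::
  "('a, 'm) monoid_scheme \<Rightarrow> ('b, 'n) monoid_scheme \<Rightarrow> ('a \<Rightarrow> 'b) \<Rightarrow> 'a \<Rightarrow> bool" where
  "relevant Gt G p gt \<longleftrightarrow>
     gt \<in> center_of Gt (carrier Gt \<inter> p -` centralizer_of G (p gt))"

end

theory Submission
  imports Defs
begin

lemma (in group) t1: "y \<in> carrier G \<Longrightarrow> a \<in> carrier G \<Longrightarrow> inv y \<otimes> (y \<otimes> a \<otimes> inv y) \<otimes> y = a"
  by (simp add: m_assoc inv_solve_left')
lemma (in group) t2: "y \<in> carrier G \<Longrightarrow> a \<in> carrier G \<Longrightarrow> y \<otimes> a \<otimes> inv y = a \<Longrightarrow> y \<otimes> a = a \<otimes> y"
  by (metis inv_closed m_assoc m_closed r_one l_inv)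
lemma (in group) t3: "y \<in> carrier G \<Longrightarrow> a \<in> carrier G \<Longrightarrow> a \<otimes> y = y \<otimes> a \<Longrightarrow> y \<otimes> a \<otimes> inv y = a"
  by (metis inv_closed m_assoc m_closed r_one r_inv)
lemma (in group) t4: "y \<in> carrier G \<Longrightarrow> a \<in> carrier G \<Longrightarrow> y \<otimes> a \<otimes> inv y = \<one> \<Longrightarrow> a = \<one>"
  by (metis t1 inv_closed l_inv r_one)
lemma (in group) t5: "z \<in> carrier G \<Longrightarrow> a \<in> carrier G \<Longrightarrow> z \<otimes> a = a \<Longrightarrow> z = \<one>"
  by (metis l_one one_closed r_cancel)
lemma (in group) t6: "y \<in> carrier G \<Longrightarrow> a \<in> carrier G \<Longrightarrow> z \<in> carrier G \<Longrightarrow> y \<otimes> z = z \<otimes> y \<Longrightarrow> z \<otimes> (y \<otimes> a \<otimes> inv y) = y \<otimes> (z \<otimes> a) \<otimes> inv y"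
  by (metis m_assoc m_closed inv_closed)

lemma conj_classE: "x \<in> conj_class H a \<Longrightarrow> (\<And>y. y \<in> carrier H \<Longrightarrow> x = y \<otimes>\<^bsub>H\<^esub> a \<otimes>\<^bsub>H\<^esub> inv\<^bsub>H\<^esub> y \<Longrightarrow> P) \<Longrightarrow> P"
  unfolding conj_class_def by auto
lemma conj_classI: "y \<in> carrier H \<Longrightarrow> x = y \<otimes>\<^bsub>H\<^esub> a \<otimes>\<^bsub>H\<^esub> inv\<^bsub>H\<^esub> y \<Longrightarrow> x \<in> conj_class H a"
  unfolding conj_class_def by auto

theorem mainTheorem13:
  fixes Gt :: "('a, 'm) monoid_scheme" and G :: "('b, 'n) monoid_scheme"
    and p :: "'a \<Rightarrow> 'b" and z gt :: 'a
  assumes "group Gt" and "group G"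
    and "p \<in> hom Gt G" and "p ` carrier Gt = carrier G"
    and "z \<in> carrier Gt" and "z \<noteq> \<one>\<^bsub>Gt\<^esub>"
    and "kernel Gt G p = {\<one>\<^bsub>Gt\<^esub>, z}"
    and "gt \<in> carrier Gt"
  shows "p ` conj_class Gt gt = conj_class G (p gt)
    \<and> carrier Gt \<inter> p -` conj_class G (p gt)
           = conj_class Gt gt \<union> conj_class Gt (z \<otimes>\<^bsub>Gt\<^esub> gt)
    \<and> (relevant Gt G p gt \<longrightarrow> conj_class Gt gt \<noteq> conj_class Gt (z \<otimes>\<^bsub>Gt\<^esub> gt))"
proof -
  interpret A: group Gt by fact
  interpret B: group G by fact
  interpret h: group_hom Gt G p using assms by (simp add: group_hom_def group_hom_axioms_def)
  have pz: "p z = \<one>\<^bsub>G\<^esub>" using assms(7) unfolding kernel_def by blast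
  have kerD: "k \<in> carrier Gt \<Longrightarrow> p k = \<one>\<^bsub>G\<^esub> \<Longrightarrow> k = \<one>\<^bsub>Gt\<^esub> \<or> k = z" for k
    using assms(7) unfolding kernel_def by blast
  have zc: "y \<otimes>\<^bsub>Gt\<^esub> z = z \<otimes>\<^bsub>Gt\<^esub> y" if y: "y \<in> carrier Gt" for y
  proof -
    have c: "y \<otimes>\<^bsub>Gt\<^esub> z \<otimes>\<^bsub>Gt\<^esub> inv\<^bsub>Gt\<^esub> y \<in> carrier Gt" using y assms(5) by simp
    have "p (y \<otimes>\<^bsub>Gt\<^esub> z \<otimes>\<^bsub>Gt\<^esub> inv\<^bsub>Gt\<^esub> y) = \<one>\<^bsub>G\<^esub>"
      using y assms(5) pz by (simp add: h.hom_mult h.hom_inv)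
    moreover have "y \<otimes>\<^bsub>Gt\<^esub> z \<otimes>\<^bsub>Gt\<^esub> inv\<^bsub>Gt\<^esub> y \<noteq> \<one>\<^bsub>Gt\<^esub>"
    proof
      assume "y \<otimes>\<^bsub>Gt\<^esub> z \<otimes>\<^bsub>Gt\<^esub> inv\<^bsub>Gt\<^esub> y = \<one>\<^bsub>Gt\<^esub>"
      hence "z = \<one>\<^bsub>Gt\<^esub>" using y assms(5) by (rule A.t4[rotated 2])
      thus False using assms(6) by simp
    qed
    ultimately have "y \<otimes>\<^bsub>Gt\<^esub> z \<otimes>\<^bsub>Gt\<^esub> inv\<^bsub>Gt\<^esub> y = z" using kerD c by blast
    thus ?thesis using y assms(5) A.t2 by blast
  qed
  have pconj: "y \<in> carrier Gt \<Longrightarrow> p (y \<otimes>\<^bsub>Gt\<^esub> gt \<otimes>\<^bsub>Gt\<^esub> inv\<^bsub>Gt\<^esub> y)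
      = p y \<otimes>\<^bsub>G\<^esub> p gt \<otimes>\<^bsub>G\<^esub> inv\<^bsub>G\<^esub> p y" for y
    using assms(8) by (simp add: h.hom_mult h.hom_inv)
  have pzg: "p (z \<otimes>\<^bsub>Gt\<^esub> gt) = p gt" using assms(5,8) pz by (simp add: h.hom_mult)
  have P1: "p ` conj_class Gt gt = conj_class G (p gt)"
  proof
    show "p ` conj_class Gt gt \<subseteq> conj_class G (p gt)"
    proof
      fix x assume "x \<in> p ` conj_class Gt gt"
      then obtain x' where x': "x' \<in> conj_class Gt gt" "x = p x'" by blast
      then obtain y where y: "y \<in> carrier Gt" "x = p (y \<otimes>\<^bsub>Gt\<^esub> gt \<otimes>\<^bsub>Gt\<^esub> inv\<^bsub>Gt\<^esub> y)"
        by (auto elim: conj_classE)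
      have "x = p y \<otimes>\<^bsub>G\<^esub> p gt \<otimes>\<^bsub>G\<^esub> inv\<^bsub>G\<^esub> p y" using y pconj by simp
      moreover have "p y \<in> carrier G" using y by simp
      ultimately show "x \<in> conj_class G (p gt)" by (rule conj_classI[rotated])
    qed
    show "conj_class G (p gt) \<subseteq> p ` conj_class Gt gt"
    proof
      fix x assume "x \<in> conj_class G (p gt)"
      then obtain u where u: "u \<in> carrier G" "x = u \<otimes>\<^bsub>G\<^esub> p gt \<otimes>\<^bsub>G\<^esub> inv\<^bsub>G\<^esub> u"
        by (rule conj_classE)
      have "u \<in> p ` carrier Gt" using u(1) assms(4) by simp
      then obtain y where y: "y \<in> carrier Gt" "p y = u" by (auto elim!: imageE)
      have "y \<otimes>\<^bsub>Gt\<^esub> gt \<otimes>\<^bsub>Gt\<^esub> inv\<^bsub>Gt\<^esub> y \<in> conj_class Gt gt"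
        using y(1) by (rule conj_classI) simp
      moreover have "x = p (y \<otimes>\<^bsub>Gt\<^esub> gt \<otimes>\<^bsub>Gt\<^esub> inv\<^bsub>Gt\<^esub> y)" using pconj[of y] y u by simp
      ultimately show "x \<in> p ` conj_class Gt gt" by blast
    qed
  qed
  have P2: "carrier Gt \<inter> p -` conj_class G (p gt)
           = conj_class Gt gt \<union> conj_class Gt (z \<otimes>\<^bsub>Gt\<^esub> gt)"
  proof
    show "carrier Gt \<inter> p -` conj_class G (p gt) \<subseteq> conj_class Gt gt \<union> conj_class Gt (z \<otimes>\<^bsub>Gt\<^esub> gt)"
    proof
      fix x assume x: "x \<in> carrier Gt \<inter> p -` conj_class G (p gt)"
      then obtain u where u: "u \<in> carrier G" "p x = u \<otimes>\<^bsub>G\<^esub> p gt \<otimes>\<^bsub>G\<^esub> inv\<^bsub>G\<^esub> u"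
        by (auto elim: conj_classE)
      have "u \<in> p ` carrier Gt" using u(1) assms(4) by simp
      then obtain y where y: "y \<in> carrier Gt" "p y = u" by (auto elim!: imageE)
      define w where "w = y \<otimes>\<^bsub>Gt\<^esub> gt \<otimes>\<^bsub>Gt\<^esub> inv\<^bsub>Gt\<^esub> y"
      have w: "w \<in> carrier Gt" using y assms(8) w_def by simp
      have pw: "p w = p x" using pconj[of y] y u w_def by simp
      define k where "k = x \<otimes>\<^bsub>Gt\<^esub> inv\<^bsub>Gt\<^esub> w"
      have k: "k \<in> carrier Gt" using x w k_def by simp
      have "p k = \<one>\<^bsub>G\<^esub>" using x w pw k_def by (simp add: h.hom_mult h.hom_inv)
      hence "k = \<one>\<^bsub>Gt\<^esub> \<or> k = z" using kerD k by blast
      moreover have xk: "x = k \<otimes>\<^bsub>Gt\<^esub> w" using x w k_def by (simp add: A.m_assoc)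
      ultimately have "x = w \<or> x = z \<otimes>\<^bsub>Gt\<^esub> w" using w by auto
      moreover have "z \<otimes>\<^bsub>Gt\<^esub> w = y \<otimes>\<^bsub>Gt\<^esub> (z \<otimes>\<^bsub>Gt\<^esub> gt) \<otimes>\<^bsub>Gt\<^esub> inv\<^bsub>Gt\<^esub> y"
        using w_def y zc[of y] assms(5,8) A.t6 by blast
      ultimately show "x \<in> conj_class Gt gt \<union> conj_class Gt (z \<otimes>\<^bsub>Gt\<^esub> gt)"
        using y by (auto simp: w_def intro: conj_classI)
    qed
    show "conj_class Gt gt \<union> conj_class Gt (z \<otimes>\<^bsub>Gt\<^esub> gt) \<subseteq> carrier Gt \<inter> p -` conj_class G (p gt)"
    proof
      fix x assume "x \<in> conj_class Gt gt \<union> conj_class Gt (z \<otimes>\<^bsub>Gt\<^esub> gt)"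
      then obtain y where y: "y \<in> carrier Gt" "x = y \<otimes>\<^bsub>Gt\<^esub> gt \<otimes>\<^bsub>Gt\<^esub> inv\<^bsub>Gt\<^esub> y
          \<or> x = y \<otimes>\<^bsub>Gt\<^esub> (z \<otimes>\<^bsub>Gt\<^esub> gt) \<otimes>\<^bsub>Gt\<^esub> inv\<^bsub>Gt\<^esub> y"
        by (auto elim!: conj_classE)
      have px: "p x = p y \<otimes>\<^bsub>G\<^esub> p gt \<otimes>\<^bsub>G\<^esub> inv\<^bsub>G\<^esub> p y" using y pconj[of y] pzg assms(5,8)
        by (auto simp: h.hom_mult h.hom_inv)
      have xc: "x \<in> carrier Gt" using y assms(5,8) by auto
      have "p x \<in> conj_class G (p gt)" using y(1) px by (intro conj_classI[of "p y"]) auto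
      with xc show "x \<in> carrier Gt \<inter> p -` conj_class G (p gt)" by blast
    qed
  qed
  have P3: "relevant Gt G p gt \<longrightarrow> conj_class Gt gt \<noteq> conj_class Gt (z \<otimes>\<^bsub>Gt\<^esub> gt)"
  proof (intro impI notI)
    assume r: "relevant Gt G p gt" and e: "conj_class Gt gt = conj_class Gt (z \<otimes>\<^bsub>Gt\<^esub> gt)"
    have "z \<otimes>\<^bsub>Gt\<^esub> gt \<in> conj_class Gt (z \<otimes>\<^bsub>Gt\<^esub> gt)" 
      using assms(5,8) by (intro conj_classI[of "\<one>\<^bsub>Gt\<^esub>"]) auto
    with e obtain y where y: "y \<in> carrier Gt" "z \<otimes>\<^bsub>Gt\<^esub> gt = y \<otimes>\<^bsub>Gt\<^esub> gt \<otimes>\<^bsub>Gt\<^esub> inv\<^bsub>Gt\<^esub> y"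
      by (auto elim: conj_classE)
    have "p gt = p y \<otimes>\<^bsub>G\<^esub> p gt \<otimes>\<^bsub>G\<^esub> inv\<^bsub>G\<^esub> p y" using pzg y pconj[of y] by simp
    hence "p gt \<otimes>\<^bsub>G\<^esub> p y = p y \<otimes>\<^bsub>G\<^esub> p gt" using y assms(8)
      using B.t2[of "p y" "p gt"] by simp
    hence "y \<in> carrier Gt \<inter> p -` centralizer_of G (p gt)"
      unfolding centralizer_of_def using y(1) by auto
    hence "gt \<otimes>\<^bsub>Gt\<^esub> y = y \<otimes>\<^bsub>Gt\<^esub> gt" using r unfolding relevant_def center_of_def by blast
    hence "z \<otimes>\<^bsub>Gt\<^esub> gt = gt" using y assms(8)
      using A.t3[of y gt] by simp
    hence "z = \<one>\<^bsub>Gt\<^esub>" using assms(5,8) using A.t5 by blast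
    thus False using assms(6) by simp
  qed
  show ?thesis using P1 P2 P3 by blast
qed

end
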